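(* Let $\Bbbk$ be a field, $m\in\mathbb N$, $K=\Bbbk[\sigma]/(\sigma^m)$ and $L=\Bbbk[\varepsilon]/(\varepsilon^{2m})$, with $K$ viewed as a subalgebra of $L$ via $\sigma=\varepsilon^2$. For $0\le j\le m$ let $K_j=K/(\sigma^j)$. Let $V$ be a $K$-module and $\tilde\theta:V\to L$ an injective $K$-linear map whose adjoint $L$-linear map $\theta:L\otimes_K V\to L$ is surjective. Then there exists $0\le j\le m$ such that $V\cong K\oplus K_j$. *)

theory Defs
  imports "HOL-Computational_Algebra.Polynomial"
begin

text \<open>The algebra \<open>k[x]/(x^n)\<close> is modelled by the
  polynomials of degree \<open>< n\<close> (its canonical representatives); \<open>trunc n p\<close> is
  the canonical representative of the class of \<open>p\<close>.\<close>

definition trunc :: "nat \<Rightarrow> 'k::field poly \<Rightarrow> 'k poly" where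
  "trunc n p = p mod monom 1 n"

definition reduced :: "nat \<Rightarrow> 'k::field poly \<Rightarrow> bool" where
  "reduced n p \<longleftrightarrow> trunc n p = p"

text \<open>The K-module K (+) K_j, with carrier pairs of reduced polynomials; sigma acts by
  multiplication by x followed by truncation, and k acts by scalar multiplication.\<close>

definition KKj :: "nat \<Rightarrow> nat \<Rightarrow> ('k::field poly \<times> 'k poly) set" where
  "KKj m j = {(a, b). reduced m a \<and> reduced j b}"

definition sigma_KKj :: "nat \<Rightarrow> nat \<Rightarrow> 'k::field poly \<times> 'k poly \<Rightarrow> 'k poly \<times> 'k poly" where
  "sigma_KKj m j ab = (trunc m (pCons 0 (fst ab)), trunc j (pCons 0 (snd ab)))"

text \<open>A K-module V is a k-vector space (given by \<open>scale\<close>) together with the action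
  \<open>T\<close> of sigma, a k-linear endomorphism with \<open>T^m = 0\<close>.
  \<open>V \<cong> K (+) K_j\<close> as K-modules: a k-linear bijection onto \<open>KKj m j\<close> intertwining
  \<open>T\<close> with the sigma-action.\<close>

definition iso_KKj ::
  "('k::field \<Rightarrow> 'v::ab_group_add \<Rightarrow> 'v) \<Rightarrow> ('v \<Rightarrow> 'v) \<Rightarrow> nat \<Rightarrow> nat \<Rightarrow> bool" where
  "iso_KKj scale T m j \<longleftrightarrow>
     (\<exists>\<phi> :: 'v \<Rightarrow> 'k poly \<times> 'k poly.
        bij_betw \<phi> UNIV (KKj m j) \<and>
        (\<forall>u v. \<phi> (u + v) = (fst (\<phi> u) + fst (\<phi> v), snd (\<phi> u) + snd (\<phi> v))) \<and>
        (\<forall>c v. \<phi> (scale c v) = (smult c (fst (\<phi> v)), smult c (snd (\<phi> v)))) \<and>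
        (\<forall>v. \<phi> (T v) = sigma_KKj m j (\<phi> v)))"

text \<open>K-linear map \<open>\<theta>~ : V \<rightarrow> L\<close>, with \<open>\<sigma>\<close> acting on L as multiplication by \<open>\<epsilon>^2\<close>.\<close>

definition K_linear_to_L ::
  "('k::field \<Rightarrow> 'v::ab_group_add \<Rightarrow> 'v) \<Rightarrow> ('v \<Rightarrow> 'v) \<Rightarrow> nat \<Rightarrow> ('v \<Rightarrow> 'k poly) \<Rightarrow> bool" where
  "K_linear_to_L scale T m th \<longleftrightarrow>
     (\<forall>v. reduced (2*m) (th v)) \<and>
     (\<forall>u v. th (u + v) = th u + th v) \<and>
     (\<forall>c v. th (scale c v) = smult c (th v)) \<and>
     (\<forall>v. th (T v) = trunc (2*m) (monom 1 2 * th v))"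

text \<open>Surjectivity of the adjoint \<open>\<theta> : L \<otimes>_K V \<rightarrow> L\<close>, \<open>\<ell> \<otimes> v \<mapsto> \<ell> \<theta>~(v)\<close>:
  its image consists of the finite sums \<open>\<Sum> \<ell>_i \<theta>~(v_i)\<close> (computed in L).\<close>

definition adjoint_surj :: "nat \<Rightarrow> ('v \<Rightarrow> 'k::field poly) \<Rightarrow> bool" where
  "adjoint_surj m th \<longleftrightarrow>
     (\<forall>y. reduced (2*m) y \<longrightarrow>
        (\<exists>xs :: ('k poly \<times> 'v) list.
           y = trunc (2*m) (\<Sum>(l, v)\<leftarrow>xs. l * th v)))"

end

theory Submission
  imports Defs
begin

lemma coeff_modX: "coeff (p mod monom (1::'k::field) n) k = (if k < n then coeff p k else 0)"
proof -
  have d: "p = p div monom 1 n * monom 1 n + p mod monom 1 n" by (rule div_mult_mod_eq[symmetric])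
  have c1: "coeff (p div monom 1 n * monom 1 n) k = (if k < n then 0 else coeff (p div monom 1 n) (k - n))"
    by (simp add: coeff_monom_mult mult.commute[of _ "monom 1 n"])
  show ?thesis
  proof (cases "k < n")
    case True
    have "coeff p k = coeff (p div monom 1 n * monom 1 n) k + coeff (p mod monom 1 n) k"
      by (subst d) simp
    with True c1 show ?thesis by simp
  next
    case False
    have "p mod monom 1 n = 0 \<or> degree (p mod monom 1 n) < n"
      using degree_mod_less[of "monom (1::'k) n" p] by (simp add: degree_monom_eq)
    then show ?thesis using False by (auto intro: coeff_eq_0)
  qed
qed

lemma coeff_trunc: "coeff (trunc n p) k = (if k < n then coeff p k else 0)"
  by (simp add: trunc_def coeff_modX)

lemma reduced_iff: "reduced n p \<longleftrightarrow> (\<forall>k\<ge>n. coeff p k = 0)"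
  unfolding reduced_def by (auto simp: poly_eq_iff coeff_trunc)


lemma gen_fill:
  fixes S :: "'k::field poly set"
  assumes add: "\<And>p q. p \<in> S \<Longrightarrow> q \<in> S \<Longrightarrow> p + q \<in> S"
    and sm: "\<And>c p. p \<in> S \<Longrightarrow> smult c p \<in> S"
    and sh: "\<And>p. p \<in> S \<Longrightarrow> (monom 1 1 * p) mod monom 1 n \<in> S"
    and red: "\<And>p. p \<in> S \<Longrightarrow> reduced n p"
    and bS: "b \<in> S" and bi: "coeff b i \<noteq> 0" and bz: "\<And>k. k < i \<Longrightarrow> coeff b k = 0"
    and y: "reduced n y" "\<And>k. k < i \<Longrightarrow> coeff y k = 0"
  shows "y \<in> S"
proof -
  have bred: "b mod monom 1 n = b" using red[OF bS] by (simp add: reduced_def trunc_def)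
  have shS: "(monom 1 d * b) mod monom 1 n \<in> S" for d
  proof (induction d)
    case 0 then show ?case using bS bred by simp
  next
    case (Suc d)
    have "(monom 1 1 * ((monom 1 d * b) mod monom 1 n)) mod monom 1 n
          = (monom 1 1 * (monom 1 d * b)) mod monom 1 n" by (rule mod_mult_right_eq)
    also have "\<dots> = (monom 1 (Suc d) * b) mod monom 1 n" by (simp add: mult_monom mult.assoc[symmetric])
    finally show ?case using sh[OF Suc] by simp
  qed
  have main: "i \<le> t \<Longrightarrow> \<forall>y. reduced n y \<and> (\<forall>k<t. coeff y k = 0) \<longrightarrow> y \<in> S" for t
  proof (induction "n - t" arbitrary: t rule: less_induct)
    case less
    show ?case
    proof (intro allI impI)
    have it: "i \<le> t" using less(2) .
    fix y :: "'k poly" assume "reduced n y \<and> (\<forall>k<t. coeff y k = 0)"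
    then have yr: "reduced n y" and yz: "\<forall>k<t. coeff y k = 0" by auto
    show "y \<in> S"
    proof (cases "t < n")
      case False
      have "y = 0" using yr yz False unfolding reduced_iff poly_eq_iff by (metis coeff_0 not_less order.trans)
      then show ?thesis using sm[OF bS, of 0] by simp
    next
      case True
      define z where "z = (monom 1 (t - i) * b) mod monom 1 n"
      have zS: "z \<in> S" using shS z_def by simp
      have cz: "coeff z k = (if k < n then (if k < t - i then 0 else coeff b (k - (t - i))) else 0)" for k
        by (simp add: z_def coeff_modX coeff_monom_mult)
      have zz: "coeff z k = 0" if "k < t" for k using cz[of k] bz[of "k - (t-i)"] that it by auto
      have zt: "coeff z t = coeff b i" using cz[of t] True it by simp
      define c where "c = coeff y t / coeff b i"
      define y' where "y' = y + smult (- c) z"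
      have y'r: "reduced n y'" using yr red[OF zS] by (auto simp: reduced_iff y'_def)
      have y'z: "\<forall>k<Suc t. coeff y' k = 0"
      proof (intro allI impI)
        fix k assume "k < Suc t"
        then consider "k < t" | "k = t" by linarith
        then show "coeff y' k = 0"
        proof cases
          case 1 then show ?thesis using yz zz by (simp add: y'_def)
        next
          case 2 then show ?thesis using zt bi by (simp add: y'_def c_def)
        qed
      qed
      have "y' \<in> S" using less(1)[of "Suc t"] True it y'r y'z less(2) by simp
      moreover have "y = y' + smult c z" by (simp add: y'_def)
      ultimately show ?thesis using add sm zS by simp
    qed
    qed
  qed
  show ?thesis using main[of i] y by simp
qed


definition Ev :: "nat \<Rightarrow> 'k::field poly \<Rightarrow> 'k poly" where
  "Ev m p = (\<Sum>k<m. monom (coeff p (2*k)) k)"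
definition Od :: "nat \<Rightarrow> nat \<Rightarrow> 'k::field poly \<Rightarrow> 'k poly" where
  "Od i j p = (\<Sum>k<j. monom (coeff p (2*(k+i)+1)) k)"
definition Em :: "nat \<Rightarrow> 'k::field poly \<Rightarrow> 'k poly" where
  "Em m a = (\<Sum>k<m. monom (coeff a k) (2*k))"
definition Om :: "nat \<Rightarrow> 'k::field poly \<Rightarrow> 'k poly" where
  "Om m b = (\<Sum>k<m. monom (coeff b k) (2*k+1))"

lemma coeff_Ev: "coeff (Ev m p) k = (if k < m then coeff p (2*k) else 0)"
  by (simp add: Ev_def coeff_sum coeff_monom)

lemma coeff_Od: "coeff (Od i j p) k = (if k < j then coeff p (2*(k+i)+1) else 0)"
  by (simp add: Od_def coeff_sum coeff_monom)

lemma coeff_Em: "coeff (Em m a) n = (if even n \<and> n div 2 < m then coeff a (n div 2) else 0)"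
proof (cases "even n")
  case True
  then obtain q where q: "n = 2*q" by (elim evenE)
  have "(\<Sum>k<m. (if 2*k = n then coeff a k else 0)) = (\<Sum>k<m. (if k = q then coeff a k else 0))"
    by (rule sum.cong) (auto simp: q)
  then show ?thesis using q by (simp add: Em_def coeff_sum coeff_monom)
next
  case False
  have "(\<Sum>k<m. (if 2*k = n then coeff a k else 0)) = 0"
    by (rule sum.neutral) (use False in auto)
  then show ?thesis using False by (simp add: Em_def coeff_sum coeff_monom)
qed

lemma coeff_Om: "coeff (Om m b) n = (if odd n \<and> n div 2 < m then coeff b (n div 2) else 0)"
proof (cases "odd n")
  case True
  then obtain q where q: "n = 2*q+1" by (elim oddE)
  have "(\<Sum>k<m. (if 2*k+1 = n then coeff b k else 0)) = (\<Sum>k<m. (if k = q then coeff b k else 0))"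
    by (rule sum.cong) (auto simp: q)
  then show ?thesis using q by (simp add: Om_def coeff_sum coeff_monom)
next
  case False
  have "(\<Sum>k<m. (if 2*k+1 = n then coeff b k else 0)) = 0"
    by (rule sum.neutral) (use False in auto)
  then show ?thesis using False by (simp add: Om_def coeff_sum coeff_monom)
qed

lemma coeff_shift2: "coeff ((monom 1 2 * p) mod monom 1 N) n = (if n < N \<and> 2 \<le> n then coeff p (n - 2) else 0)"
  by (simp add: coeff_modX coeff_monom_mult)

lemma coeff_shift1: "coeff ((monom 1 1 * p) mod monom 1 N) n = (if n < N \<and> 1 \<le> n then coeff p (n - 1) else 0)"
  by (simp add: coeff_modX coeff_monom_mult)

lemma Em_shift: "Em m ((monom 1 1 * a) mod monom 1 m) = (monom 1 2 * Em m a) mod monom 1 (2*m)"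
proof (rule poly_eqI)
  fix n
  show "coeff (Em m ((monom 1 1 * a) mod monom 1 m)) n = coeff ((monom 1 2 * Em m a) mod monom 1 (2*m)) n"
  proof (cases "even n")
    case True
    then obtain q where "n = 2*q" by (elim evenE)
    then show ?thesis by (cases q) (auto simp: coeff_modX coeff_monom_mult coeff_Em coeff_Om)
  next
    case False
    then obtain q where "n = 2*q+1" by (elim oddE)
    then show ?thesis by (cases q) (auto simp: coeff_modX coeff_monom_mult coeff_Em coeff_Om)
  qed
qed

lemma Om_shift: "Om m ((monom 1 1 * b) mod monom 1 m) = (monom 1 2 * Om m b) mod monom 1 (2*m)"
proof (rule poly_eqI)
  fix n
  show "coeff (Om m ((monom 1 1 * b) mod monom 1 m)) n = coeff ((monom 1 2 * Om m b) mod monom 1 (2*m)) n"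
  proof (cases "even n")
    case True
    then obtain q where "n = 2*q" by (elim evenE)
    then show ?thesis by (cases q) (auto simp: coeff_modX coeff_monom_mult coeff_Em coeff_Om)
  next
    case False
    then obtain q where "n = 2*q+1" by (elim oddE)
    then show ?thesis by (cases q) (auto simp: coeff_modX coeff_monom_mult coeff_Em coeff_Om)
  qed
qed

lemma Em_add: "Em m (a + b) = Em m a + Em m b"
  by (rule poly_eqI) (simp add: coeff_Em)
lemma Em_smult: "Em m (smult c a) = smult c (Em m a)"
  by (rule poly_eqI) (simp add: coeff_Em)
lemma Om_add: "Om m (a + b) = Om m a + Om m b"
  by (rule poly_eqI) (simp add: coeff_Om)
lemma Om_smult: "Om m (smult c a) = smult c (Om m a)"
  by (rule poly_eqI) (simp add: coeff_Om)

lemma decomp: "reduced (2*m) p \<Longrightarrow> p = Em m (Ev m p) + Om m (Od 0 m p)"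
  by (rule poly_eqI) (auto simp: reduced_iff coeff_Em coeff_Om coeff_Ev coeff_Od elim!: evenE oddE)


lemma Ev_add: "Ev m (a + b) = Ev m a + Ev m b"
  by (rule poly_eqI) (simp add: coeff_Ev)
lemma Ev_smult: "Ev m (smult c a) = smult c (Ev m a)"
  by (rule poly_eqI) (simp add: coeff_Ev)
lemma Od_add: "Od i j (a + b) = Od i j a + Od i j b"
  by (rule poly_eqI) (simp add: coeff_Od)
lemma Od_smult: "Od i j (smult c a) = smult c (Od i j a)"
  by (rule poly_eqI) (simp add: coeff_Od)

lemma coeff0_sum_list:
  "coeff (\<Sum>(l, v)\<leftarrow>xs. l * th v) 0 = (\<Sum>(l, v)\<leftarrow>xs. coeff l 0 * coeff (th v) 0)"
  by (induction xs) (auto simp: coeff_mult_0)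

lemma main_pos:
  fixes scale :: "'k::field \<Rightarrow> 'v::ab_group_add \<Rightarrow> 'v"
    and T :: "'v \<Rightarrow> 'v"
    and m :: nat
    and th :: "'v \<Rightarrow> 'k poly"
  assumes "m > 0"
    and lin: "K_linear_to_L scale T m th"
    and inj: "inj th"
    and adj: "adjoint_surj m th"
  shows "\<exists>j\<le>m. iso_KKj scale T m j"
proof -
  define N where "N = 2*m"
  define X where "X = monom (1::'k) N"
  have N0: "N > 0" using assms(1) by (simp add: N_def)
  have red: "\<And>v. reduced N (th v)" and tadd: "\<And>u v. th (u + v) = th u + th v"
    and tsc: "\<And>c v. th (scale c v) = smult c (th v)"
    and tT: "\<And>v. th (T v) = (monom 1 2 * th v) mod X"
    using lin by (auto simp: K_linear_to_L_def N_def X_def trunc_def)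
  have redX: "\<And>v. th v mod X = th v" using red by (simp add: reduced_def trunc_def X_def)
  have th0: "th 0 = 0" using tadd[of 0 0] by (metis add.right_neutral add_left_cancel)
  obtain v0 where v0: "coeff (th v0) 0 \<noteq> 0"
  proof -
    have "reduced N 1" using N0 by (auto simp: reduced_iff)
    then obtain xs :: "('k poly \<times> 'v) list" where xs: "1 = trunc N (\<Sum>(l, v)\<leftarrow>xs. l * th v)"
      using adj by (auto simp: adjoint_surj_def N_def)
    have "coeff (1::'k poly) 0 = coeff (\<Sum>(l, v)\<leftarrow>xs. l * th v) 0"
      by (subst xs) (simp add: coeff_trunc N0)
    then have "(\<Sum>(l, v)\<leftarrow>xs. coeff l 0 * coeff (th v) 0) \<noteq> 0" by (simp add: coeff0_sum_list)
    then have "\<exists>v. coeff (th v) 0 \<noteq> 0"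
    proof (rule contrapos_np)
      assume "\<not> (\<exists>v. coeff (th v) 0 \<noteq> 0)"
      then have "\<And>v. coeff (th v) 0 = 0" by auto
      then show "(\<Sum>(l, v)\<leftarrow>xs. coeff l 0 * coeff (th v) 0) = 0"
        by (induction xs) auto
    qed
    then show ?thesis using that by blast
  qed
  define w where "w = th v0"
  obtain u where u: "(u * w) mod X = 1"
  proof -
    define S where "S = {(y * w) mod X | y. True}"
    have "1 \<in> S"
    proof (rule gen_fill[where n = N and b = w and i = 0])
      show "p + q \<in> S" if "p \<in> S" "q \<in> S" for p q
        using that unfolding S_def by (auto simp: poly_mod_add_left[symmetric] distrib_right[symmetric])
      show "smult c p \<in> S" if pS: "p \<in> S" for c p
      proof -
        obtain y where "p = (y * w) mod X" using pS S_def by auto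
        then have "smult c p = (smult c y * w) mod X" by (simp add: mod_smult_left)
        then show ?thesis unfolding S_def by blast
      qed
      show "(monom 1 1 * p) mod monom 1 N \<in> S" if pS: "p \<in> S" for p
      proof -
        obtain y where "p = (y * w) mod X" using pS S_def by auto
        then have "(monom 1 1 * p) mod monom 1 N = ((monom 1 1 * y) * w) mod X"
          by (simp add: X_def mod_mult_right_eq mult.assoc)
        then show ?thesis unfolding S_def by blast
      qed
      show "reduced N p" if "p \<in> S" for p
        using that unfolding S_def by (auto simp: reduced_iff coeff_modX X_def)
      show "w \<in> S" unfolding S_def using redX[of v0] by (auto simp: w_def intro!: exI[of _ 1])
      show "coeff w 0 \<noteq> 0" using v0 w_def by simp
      show "reduced N 1" using N0 by (auto simp: reduced_iff)
    qed auto
    then show ?thesis using that S_def by auto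
  qed
  define psi where "psi v = (u * th v) mod X" for v
  have padd: "psi (a + b) = psi a + psi b" for a b
    by (simp add: psi_def tadd distrib_left poly_mod_add_left)
  have psc: "psi (scale c a) = smult c (psi a)" for c a
    by (simp add: psi_def tsc mod_smult_left)
  have p0: "psi 0 = 0" by (simp add: psi_def th0)
  have pdiff: "psi (a - b) = psi a - psi b" for a b
    using padd[of "a - b" b] by (simp add: algebra_simps)
  have pT: "psi (T a) = (monom 1 2 * psi a) mod X" for a
  proof -
    have "psi (T a) = (u * (monom 1 2 * th a)) mod X" by (simp add: psi_def tT mod_mult_right_eq)
    also have "\<dots> = (monom 1 2 * (u * th a)) mod X" by (simp add: ac_simps)
    also have "\<dots> = (monom 1 2 * psi a) mod X" by (simp add: psi_def mod_mult_right_eq)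
    finally show ?thesis .
  qed
  have pred: "reduced N (psi a)" for a by (auto simp: reduced_iff psi_def coeff_modX X_def)
  have pinj: "a = b" if "psi a = psi b" for a b
  proof -
    have bk: "(w * psi c) mod X = th c" for c
    proof -
      have "(w * psi c) mod X = (w * (u * th c)) mod X" by (simp add: psi_def mod_mult_right_eq)
      also have "\<dots> = ((u * w) * th c) mod X" by (simp add: ac_simps)
      also have "\<dots> = (((u * w) mod X) * th c) mod X" by (simp add: mod_mult_left_eq)
      also have "\<dots> = th c" using u redX by simp
      finally show ?thesis .
    qed
    have "th a = th b" using bk[of a] bk[of b] that by simp
    then show ?thesis using inj by (simp add: inj_eq)
  qed
  have p1: "psi v0 = 1" using u by (simp add: psi_def w_def)
  define W where "W = range psi"
  have Wadd: "p + q \<in> W" if pq: "p \<in> W" "q \<in> W" for p q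
  proof -
    obtain a b where "p = psi a" "q = psi b" using pq unfolding W_def by auto
    then have "p + q = psi (a + b)" by (simp add: padd)
    then show ?thesis unfolding W_def by simp
  qed
  have Wdiff: "p - q \<in> W" if pq: "p \<in> W" "q \<in> W" for p q
  proof -
    obtain a b where "p = psi a" "q = psi b" using pq unfolding W_def by auto
    then have "p - q = psi (a - b)" by (simp add: pdiff)
    then show ?thesis unfolding W_def by simp
  qed
  have Wsm: "smult c p \<in> W" if pW: "p \<in> W" for c p
  proof -
    obtain a where "p = psi a" using pW unfolding W_def by auto
    then have "smult c p = psi (scale c a)" by (simp add: psc)
    then show ?thesis unfolding W_def by simp
  qed
  have WT: "(monom 1 2 * p) mod X \<in> W" if pW: "p \<in> W" for p
  proof -
    obtain a where "p = psi a" using pW unfolding W_def by auto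
    then have "(monom 1 2 * p) mod X = psi (T a)" by (simp add: pT)
    then show ?thesis unfolding W_def by simp
  qed
  have W0: "0 \<in> W" unfolding W_def using p0[symmetric] by simp
  have Em_W: "Em m a \<in> W" if ar: "reduced m a" for a
  proof -
    define S where "S = {a. reduced m a \<and> Em m a \<in> W}"
    have "a \<in> S"
    proof (rule gen_fill[where n = m and b = 1 and i = 0])
      show "p + q \<in> S" if "p \<in> S" "q \<in> S" for p q
        using that Wadd unfolding S_def by (auto simp: reduced_iff Em_add)
      show "smult c p \<in> S" if "p \<in> S" for c p
        using that Wsm unfolding S_def by (auto simp: reduced_iff Em_smult)
      show "(monom 1 1 * p) mod monom 1 m \<in> S" if pS: "p \<in> S" for p
      proof -
        have e: "Em m ((monom 1 1 * p) mod monom 1 m) = (monom 1 2 * Em m p) mod X"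
          by (simp only: Em_shift X_def N_def)
        have r: "reduced m ((monom 1 1 * p) mod monom 1 m)" by (simp add: reduced_iff coeff_modX)
        have "Em m ((monom 1 1 * p) mod monom 1 m) \<in> W" unfolding e using WT pS S_def by blast
        then show ?thesis using r unfolding S_def by blast
      qed
      show "reduced m p" if "p \<in> S" for p using that S_def by auto
      have "Em m 1 = 1" using assms(1) by (auto intro!: poly_eqI simp: coeff_Em coeff_1 elim!: evenE)
      then show "1 \<in> S" using assms(1) p1 unfolding S_def W_def by (auto simp: reduced_iff image_iff intro: exI[of _ v0])
      show "reduced m a" by (rule ar)
    qed auto
    then show ?thesis using S_def by auto
  qed
  define B where "B = {b. reduced m b \<and> Om m b \<in> W}"
  have OdB: "Od 0 m (psi v) \<in> B" for v
  proof -
    have d: "psi v = Em m (Ev m (psi v)) + Om m (Od 0 m (psi v))"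
      using decomp[of m "psi v"] pred[of v] by (simp add: N_def)
    have "Ev m (psi v) \<in> {a. reduced m a}" by (simp add: reduced_iff coeff_Ev)
    then have "Em m (Ev m (psi v)) \<in> W" using Em_W by simp
    moreover have "psi v \<in> W" unfolding W_def by simp
    ultimately have "psi v - Em m (Ev m (psi v)) \<in> W" using Wdiff by simp
    then have "Om m (Od 0 m (psi v)) \<in> W" using d by (metis add_diff_cancel_left')
    moreover have "reduced m (Od 0 m (psi v))" by (simp add: reduced_iff coeff_Od)
    ultimately show ?thesis unfolding B_def by simp
  qed
  define P where "P t \<longleftrightarrow> t \<le> m \<and> (\<forall>b\<in>B. \<forall>k<t. coeff b k = 0)" for t
  define i where "i = (GREATEST t. P t)"
  have Pi: "P i" unfolding i_def by (rule GreatestI_nat[of P 0 m]) (auto simp: P_def)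
  have Pmax: "t \<le> i" if "P t" for t unfolding i_def by (rule Greatest_le_nat[of P t m]) (use that in \<open>auto simp: P_def\<close>)
  have im: "i \<le> m" using Pi P_def by simp
  have Bz: "\<And>b k. b \<in> B \<Longrightarrow> k < i \<Longrightarrow> coeff b k = 0" using Pi P_def by auto
  have Bfill: "y \<in> B" if yr: "reduced m y" and yz: "\<And>k. k < i \<Longrightarrow> coeff y k = 0" for y
  proof (cases "i = m")
    case True
    then have "y = 0" using yr yz unfolding reduced_iff poly_eq_iff by (metis coeff_0 not_less)
    moreover have "Om m 0 = (0::'k poly)" by (rule poly_eqI) (simp add: coeff_Om)
    ultimately show ?thesis using W0 unfolding B_def by (simp add: reduced_iff)
  next
    case False
    then have ilt: "i < m" using im by simp
    obtain b where bB: "b \<in> B" and bi: "coeff b i \<noteq> 0"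
    proof (rule ccontr)
      assume "\<not> thesis"
      then have "\<forall>b\<in>B. coeff b i = 0" using that by blast
      then have "P (Suc i)" using Pi ilt unfolding P_def by (auto simp: less_Suc_eq)
      then show False using Pmax by fastforce
    qed
    show ?thesis
    proof (rule gen_fill[where n = m and b = b and i = i])
      show "p + q \<in> B" if "p \<in> B" "q \<in> B" for p q
        using that Wadd unfolding B_def by (auto simp: reduced_iff Om_add)
      show "smult c p \<in> B" if "p \<in> B" for c p
        using that Wsm unfolding B_def by (auto simp: reduced_iff Om_smult)
      show "(monom 1 1 * p) mod monom 1 m \<in> B" if pS: "p \<in> B" for p
      proof -
        have e: "Om m ((monom 1 1 * p) mod monom 1 m) = (monom 1 2 * Om m p) mod X"
          by (simp only: Om_shift X_def N_def)
        have r: "reduced m ((monom 1 1 * p) mod monom 1 m)" by (simp add: reduced_iff coeff_modX)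
        have "Om m ((monom 1 1 * p) mod monom 1 m) \<in> W" unfolding e using WT pS B_def by blast
        then show ?thesis using r unfolding B_def by blast
      qed
      show "reduced m p" if "p \<in> B" for p using that B_def by auto
    qed (use bB bi Bz yr yz in auto)
  qed
  have oddz: "coeff (psi v) (2*k+1) = 0" if "k < i" for v k
    using Bz[OF OdB[of v] that] that im by (simp add: coeff_Od)
  define j where "j = m - i"
  define phi where "phi v = (Ev m (psi v), Od i j (psi v))" for v
  have phi_inj: "a = b" if e: "phi a = phi b" for a b
  proof -
    have e1: "Ev m (psi a) = Ev m (psi b)" and e2: "Od i j (psi a) = Od i j (psi b)"
      using e by (auto simp: phi_def)
    have "coeff (psi a) n = coeff (psi b) n" for n
    proof (cases "n < N")
      case False
      then show ?thesis using pred[of a] pred[of b] by (simp add: reduced_iff)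
    next
      case nN: True
      show ?thesis
      proof (cases "even n")
        case True
        then obtain q where q: "n = 2*q" by (elim evenE)
        then have "q < m" using nN N_def by simp
        then show ?thesis using arg_cong[OF e1, of "\<lambda>p. coeff p q"] q by (simp add: coeff_Ev)
      next
        case False
        then obtain q where q: "n = 2*q+1" by (elim oddE)
        then have qm: "q < m" using nN N_def by simp
        show ?thesis
        proof (cases "q < i")
          case True then show ?thesis using oddz q by simp
        next
          case False
          then have "q - i < j" using qm j_def by simp
          then show ?thesis using arg_cong[OF e2, of "\<lambda>p. coeff p (q - i)"] q False
            by (simp add: coeff_Od)
        qed
      qed
    qed
    then have "psi a = psi b" by (simp add: poly_eq_iff)
    then show ?thesis by (rule pinj)
  qed
  have phi_img: "range phi = KKj m j"
  proof
    show "range phi \<subseteq> KKj m j"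
      by (auto simp: phi_def KKj_def reduced_iff coeff_Ev coeff_Od)
    show "KKj m j \<subseteq> range phi"
    proof
      fix ac :: "'k poly \<times> 'k poly" assume "ac \<in> KKj m j"
      then obtain a c where ac: "ac = (a, c)" and ar: "reduced m a" and cr: "reduced j c"
        by (auto simp: KKj_def)
      define b where "b = monom 1 i * c"
      have cb: "coeff b k = (if k < i then 0 else coeff c (k - i))" for k
        by (simp add: b_def coeff_monom_mult)
      have br: "reduced m b" using cr im by (auto simp: reduced_iff cb j_def)
      have "b \<in> B" by (rule Bfill[OF br]) (simp add: cb)
      then have "Om m b \<in> W" by (simp add: B_def)
      then have "Em m a + Om m b \<in> W" using Wadd Em_W[OF ar] by simp
      then obtain v where v: "Em m a + Om m b = psi v" unfolding W_def by auto
      have "Ev m (psi v) = a"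
        by (rule poly_eqI) (use ar in \<open>auto simp: v[symmetric] coeff_Ev coeff_Em coeff_Om reduced_iff\<close>)
      moreover have "Od i j (psi v) = c"
        by (rule poly_eqI) (use cr im in \<open>auto simp: v[symmetric] coeff_Od coeff_Em coeff_Om reduced_iff cb j_def\<close>)
      ultimately show "ac \<in> range phi" using ac by (auto simp: phi_def image_iff intro!: exI[of _ v])
    qed
  qed
  have phiT: "phi (T v) = sigma_KKj m j (phi v)" for v
  proof -
    define p where "p = psi v"
    have c2: "coeff ((monom 1 2 * p) mod X) n = (if n < N \<and> 2 \<le> n then coeff p (n - 2) else 0)" for n
      by (simp add: X_def coeff_modX coeff_monom_mult)
    have 1: "Ev m ((monom 1 2 * p) mod X) = trunc m (pCons 0 (Ev m p))"
    proof (rule poly_eqI)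
      fix k show "coeff (Ev m ((monom 1 2 * p) mod X)) k = coeff (trunc m (pCons 0 (Ev m p))) k"
        by (cases k) (auto simp: c2 coeff_Ev coeff_trunc coeff_pCons N_def)
    qed
    have 2: "Od i j ((monom 1 2 * p) mod X) = trunc j (pCons 0 (Od i j p))"
    proof (rule poly_eqI)
      fix k show "coeff (Od i j ((monom 1 2 * p) mod X)) k = coeff (trunc j (pCons 0 (Od i j p))) k"
      proof (cases k)
        case 0
        show ?thesis
        proof (cases i)
          case 0 then show ?thesis using \<open>k = 0\<close> by (auto simp: c2 coeff_Od coeff_trunc)
        next
          case (Suc i')
          have "coeff p (2*i'+1) = 0" unfolding p_def by (rule oddz) (simp add: Suc)
          then show ?thesis using \<open>k = 0\<close> Suc by (auto simp: c2 coeff_Od coeff_trunc)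
        qed
      next
        case (Suc k')
        then show ?thesis using im by (auto simp: c2 coeff_Od coeff_trunc N_def j_def)
      qed
    qed
    show ?thesis using 1 2 by (simp add: phi_def sigma_KKj_def pT p_def)
  qed
  show ?thesis
  proof (intro exI conjI)
    show "j \<le> m" by (simp add: j_def)
    show "iso_KKj scale T m j" unfolding iso_KKj_def
    proof (intro exI[of _ phi] conjI allI)
      show "bij_betw phi UNIV (KKj m j)"
        unfolding bij_betw_def using phi_inj phi_img by (auto intro: injI)
      show "phi (a + b) = (fst (phi a) + fst (phi b), snd (phi a) + snd (phi b))" for a b
        by (simp add: phi_def padd Ev_add Od_add)
      show "phi (scale c a) = (smult c (fst (phi a)), smult c (snd (phi a)))" for c a
        by (simp add: phi_def psc Ev_smult Od_smult)
      show "phi (T a) = sigma_KKj m j (phi a)" for a by (rule phiT)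
    qed
  qed
qed

theorem lemma3p3:
  fixes scale :: "'k::field \<Rightarrow> 'v::ab_group_add \<Rightarrow> 'v"
    and T :: "'v \<Rightarrow> 'v"
    and m :: nat
    and th :: "'v \<Rightarrow> 'k poly"
  assumes "vector_space scale"
    and "Vector_Spaces.linear scale scale T"
    and "\<forall>v. (T ^^ m) v = 0"
    and "K_linear_to_L scale T m th"
    and "inj th"
    and "adjoint_surj m th"
  shows "\<exists>j\<le>m. iso_KKj scale T m j"
proof (cases "m = 0")
  case False
  then show ?thesis using main_pos[OF _ assms(4,5,6)] by simp
next
  case True
  have v0: "v = 0" for v :: 'v using assms(3) True by simp
  have r0: "reduced 0 p \<longleftrightarrow> p = 0" for p :: "'k poly"
    by (auto simp: reduced_iff poly_eq_iff)
  have K0: "KKj 0 0 = {(0::'k poly, 0::'k poly)}" by (auto simp: KKj_def r0)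
  have t0: "trunc 0 p = 0" for p :: "'k poly" by (simp add: trunc_def)
  have "iso_KKj scale T 0 0" unfolding iso_KKj_def
  proof (intro exI[of _ "\<lambda>_::'v. (0::'k poly, 0::'k poly)"] conjI allI)
    show "bij_betw (\<lambda>_::'v. (0::'k poly, 0::'k poly)) UNIV (KKj 0 0)"
      unfolding bij_betw_def K0
    proof
      show "inj_on (\<lambda>_::'v. (0::'k poly, 0::'k poly)) UNIV" by (rule injI) (metis v0)
    qed auto
  qed (auto simp: sigma_KKj_def t0)
  then show ?thesis using True by auto
qed

end
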